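(* Let $A$ be a one-dimensional integral domain. Every overring of $A$ that is finitely generated as an $A$-algebra, flat over $A$, and well-centered on $A$ is a localization of $A$.
   Context: An overring of $A$ is a subring of the field of fractions of $A$ containing $A$. $B$ is well-centered on $A$ if for each $b\in B$ there is a unit $u$ of $B$ with $ub\in A$. $B$ is a localization of $A$ if $B=S^{-1}A$ for a multiplicatively closed set $S$ of nonzero elements of $A$. *)

theory Defs
  imports Main
begin

text \<open>We work inside an ambient field K (a type of class field). A subring A of K
  whose field of fractions is all of K models an integral domain A with fraction field K.\<close>

definition subring :: "'k::field set \<Rightarrow> bool" where
  "subring R \<longleftrightarrow> 0 \<in> R \<and> 1 \<in> R \<and> (\<forall>x\<in>R. \<forall>y\<in>R. x + y \<in> R \<and> x * y \<in> R \<and> - x \<in> R)"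

definition is_fraction_field_of :: "'k::field set \<Rightarrow> bool" where
  "is_fraction_field_of A \<longleftrightarrow> (\<forall>x::'k. \<exists>a\<in>A. \<exists>b\<in>A. b \<noteq> 0 \<and> x = a / b)"

definition overring :: "'k::field set \<Rightarrow> 'k set \<Rightarrow> bool" where
  "overring A B \<longleftrightarrow> subring B \<and> A \<subseteq> B"

definition ideal_of :: "'k::field set \<Rightarrow> 'k set \<Rightarrow> bool" where
  "ideal_of A I \<longleftrightarrow> I \<subseteq> A \<and> 0 \<in> I \<and> (\<forall>x\<in>I. \<forall>y\<in>I. x + y \<in> I) \<and>
     (\<forall>a\<in>A. \<forall>x\<in>I. a * x \<in> I)"

definition prime_ideal_of :: "'k::field set \<Rightarrow> 'k set \<Rightarrow> bool" where
  "prime_ideal_of A P \<longleftrightarrow> ideal_of A P \<and> P \<noteq> A \<and>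
     (\<forall>x\<in>A. \<forall>y\<in>A. x * y \<in> P \<longrightarrow> x \<in> P \<or> y \<in> P)"

definition prime_chain_of_length :: "'k::field set \<Rightarrow> nat \<Rightarrow> bool" where
  "prime_chain_of_length A n \<longleftrightarrow> (\<exists>P :: nat \<Rightarrow> 'k set.
      (\<forall>i\<le>n. prime_ideal_of A (P i)) \<and> (\<forall>i<n. P i \<subset> P (Suc i)))"

definition krull_dim_eq :: "'k::field set \<Rightarrow> nat \<Rightarrow> bool" where
  "krull_dim_eq A n \<longleftrightarrow> prime_chain_of_length A n \<and> (\<forall>m>n. \<not> prime_chain_of_length A m)"

definition fin_gen_algebra :: "'k::field set \<Rightarrow> 'k set \<Rightarrow> bool" where
  "fin_gen_algebra A B \<longleftrightarrow> (\<exists>S. finite S \<and> S \<subseteq> B \<and>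
      B = \<Inter>{C. subring C \<and> A \<subseteq> C \<and> S \<subseteq> C})"

text \<open>Flatness of B over A, via the equational criterion of flatness.\<close>
definition flat_over :: "'k::field set \<Rightarrow> 'k set \<Rightarrow> bool" where
  "flat_over A B \<longleftrightarrow> (\<forall>n (a :: nat \<Rightarrow> 'k) (b :: nat \<Rightarrow> 'k).
      (\<forall>i<n. a i \<in> A \<and> b i \<in> B) \<and> (\<Sum>i<n. a i * b i) = 0 \<longrightarrow>
      (\<exists>m (c :: nat \<Rightarrow> 'k) (x :: nat \<Rightarrow> nat \<Rightarrow> 'k).
          (\<forall>j<m. c j \<in> B) \<and> (\<forall>i<n. \<forall>j<m. x i j \<in> A) \<and>
          (\<forall>i<n. b i = (\<Sum>j<m. x i j * c j)) \<and>
          (\<forall>j<m. (\<Sum>i<n. a i * x i j) = 0)))"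

definition unit_of :: "'k::field set \<Rightarrow> 'k \<Rightarrow> bool" where
  "unit_of B u \<longleftrightarrow> u \<in> B \<and> (\<exists>v\<in>B. u * v = 1)"

definition well_centered :: "'k::field set \<Rightarrow> 'k set \<Rightarrow> bool" where
  "well_centered A B \<longleftrightarrow> (\<forall>b\<in>B. \<exists>u. unit_of B u \<and> u * b \<in> A)"

definition is_localization :: "'k::field set \<Rightarrow> 'k set \<Rightarrow> bool" where
  "is_localization A B \<longleftrightarrow> (\<exists>S. S \<subseteq> A - {0} \<and> 1 \<in> S \<and> (\<forall>s\<in>S. \<forall>t\<in>S. s * t \<in> S) \<and>
      B = {a / s | a s. a \<in> A \<and> s \<in> S})"

end

theory Submission
  imports Defs
begin

lemma subring_pow: "subring R \<Longrightarrow> x \<in> R \<Longrightarrow> x ^ n \<in> R"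
  by (induction n) (auto simp: subring_def)

lemma subring_prod: "finite F \<Longrightarrow> subring R \<Longrightarrow> (\<forall>x\<in>F. f x \<in> R) \<Longrightarrow> prod f F \<in> R"
  by (induction F rule: finite_induct) (auto simp: subring_def)

lemma prime_exists:
  assumes R: "subring R" and I: "ideal_of R I" and MR: "M \<subseteq> R" and M1: "1 \<in> M"
    and Mm: "\<forall>x\<in>M. \<forall>y\<in>M. x*y \<in> M" and dis: "I \<inter> M = {}"
  shows "\<exists>Q. prime_ideal_of R Q \<and> I \<subseteq> Q \<and> Q \<inter> M = {}"
proof -
  have R0: "0 \<in> R" and R1: "1 \<in> R" and Radd: "\<And>x y. x \<in> R \<Longrightarrow> y \<in> R \<Longrightarrow> x + y \<in> R"
    and Rmul: "\<And>x y. x \<in> R \<Longrightarrow> y \<in> R \<Longrightarrow> x * y \<in> R"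
    using R unfolding subring_def by auto
  define SS where "SS = {J. ideal_of R J \<and> I \<subseteq> J \<and> J \<inter> M = {}}"
  have "SS \<noteq> {}" using I dis unfolding SS_def by blast
  moreover have "\<Union>C \<in> SS" if "C \<noteq> {}" "subset.chain SS C" for C
  proof -
    from that have CS: "C \<subseteq> SS" and ch: "\<forall>X\<in>C. \<forall>Y\<in>C. X \<subseteq> Y \<or> Y \<subseteq> X"
      unfolding subset_chain_def by blast+
    obtain J0 where J0: "J0 \<in> C" using \<open>C \<noteq> {}\<close> by blast
    have iC: "ideal_of R X" "I \<subseteq> X" "X \<inter> M = {}" if "X \<in> C" for X
      using CS that unfolding SS_def by blast+
    have "ideal_of R (\<Union>C)" unfolding ideal_of_def
    proof (intro conjI ballI)
      show "\<Union>C \<subseteq> R" using iC(1) unfolding ideal_of_def by blast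
      show "0 \<in> \<Union>C" using iC(1)[OF J0] J0 unfolding ideal_of_def by blast
    next
      fix x y assume "x \<in> \<Union>C" "y \<in> \<Union>C"
      then obtain X Y where XY: "X \<in> C" "Y \<in> C" "x \<in> X" "y \<in> Y" by blast
      have iX: "ideal_of R X" and iY: "ideal_of R Y" using XY iC by blast+
      show "x + y \<in> \<Union>C"
      proof (cases "X \<subseteq> Y")
        case True then have "x + y \<in> Y" using iY XY unfolding ideal_of_def by blast
        then show ?thesis using XY by blast
      next
        case False then have "Y \<subseteq> X" using ch XY by blast
        then have "x + y \<in> X" using iX XY unfolding ideal_of_def by blast
        then show ?thesis using XY by blast
      qed
    next
      fix a x assume "a \<in> R" "x \<in> \<Union>C"
      then obtain X where X: "X \<in> C" "x \<in> X" by blast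
      then have "ideal_of R X" using iC by blast
      then have "a * x \<in> X" using X \<open>a \<in> R\<close> unfolding ideal_of_def by blast
      then show "a * x \<in> \<Union>C" using X by blast
    qed
    moreover have "I \<subseteq> \<Union>C" using iC(2)[OF J0] J0 by blast
    moreover have "\<Union>C \<inter> M = {}" using iC(3) by blast
    ultimately show ?thesis unfolding SS_def by blast
  qed
  ultimately obtain Q where Q: "Q \<in> SS" and mx: "\<forall>X\<in>SS. Q \<subseteq> X \<longrightarrow> X = Q"
    using subset_Zorn_nonempty[of SS] by blast
  have Qi: "ideal_of R Q" and IQ: "I \<subseteq> Q" and QM: "Q \<inter> M = {}" using Q unfolding SS_def by blast+
  have QR: "Q \<subseteq> R" and Q0: "0 \<in> Q" and Qadd: "\<And>x y. x \<in> Q \<Longrightarrow> y \<in> Q \<Longrightarrow> x + y \<in> Q"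
    and Qmul: "\<And>a x. a \<in> R \<Longrightarrow> x \<in> Q \<Longrightarrow> a * x \<in> Q"
    using Qi unfolding ideal_of_def by blast+
  have meet: "\<exists>q\<in>Q. \<exists>r\<in>R. q + r * x \<in> M" if x: "x \<in> R" "x \<notin> Q" for x
  proof (rule ccontr)
    assume nm: "\<not> ?thesis"
    define Qx where "Qx = {q + r * x | q r. q \<in> Q \<and> r \<in> R}"
    have "ideal_of R Qx" unfolding ideal_of_def
    proof (intro conjI ballI)
      show "Qx \<subseteq> R"
      proof
        fix y assume "y \<in> Qx"
        then obtain q r where "y = q + r * x" "q \<in> Q" "r \<in> R" unfolding Qx_def by blast
        then show "y \<in> R" using QR x Radd Rmul by blast
      qed
      have "(0::'a) = 0 + 0 * x" by simp
      then show "0 \<in> Qx" unfolding Qx_def using Q0 R0 by blast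
    next
      fix y z assume "y \<in> Qx" "z \<in> Qx"
      then obtain q1 r1 q2 r2 where H: "y = q1 + r1 * x" "z = q2 + r2 * x" "q1 \<in> Q" "q2 \<in> Q" "r1 \<in> R" "r2 \<in> R"
        unfolding Qx_def by blast
      have "q1 + q2 \<in> Q" "r1 + r2 \<in> R" using H Qadd Radd by blast+
      moreover have "y + z = (q1 + q2) + (r1 + r2) * x" using H by (simp add: algebra_simps)
      ultimately show "y + z \<in> Qx" unfolding Qx_def by blast
    next
      fix a y assume a: "a \<in> R" and "y \<in> Qx"
      then obtain q1 r1 where H: "y = q1 + r1 * x" "q1 \<in> Q" "r1 \<in> R"
        unfolding Qx_def by blast
      have "a * q1 \<in> Q" "a * r1 \<in> R" using H a Qmul Rmul by blast+
      moreover have "a * y = (a * q1) + (a * r1) * x" using H by (simp add: algebra_simps)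
      ultimately show "a * y \<in> Qx" unfolding Qx_def by blast
    qed
    moreover have "Q \<subseteq> Qx"
    proof
      fix q assume "q \<in> Q"
      moreover have "q = q + 0 * x" by simp
      ultimately show "q \<in> Qx" unfolding Qx_def using R0 by blast
    qed
    moreover have "x \<in> Qx"
    proof -
      have "x = 0 + 1 * x" by simp
      then show ?thesis unfolding Qx_def using Q0 R1 by blast
    qed
    moreover have "Qx \<inter> M = {}" using nm unfolding Qx_def by blast
    ultimately have "Qx \<in> SS" "Q \<subseteq> Qx" "x \<in> Qx" using IQ unfolding SS_def by blast+
    then show False using mx x by blast
  qed
  have "prime_ideal_of R Q" unfolding prime_ideal_of_def
  proof (intro conjI ballI impI)
    show "ideal_of R Q" by fact
    show "Q \<noteq> R" using QM M1 MR by blast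
  next
    fix x y assume x: "x \<in> R" and y: "y \<in> R" and xy: "x * y \<in> Q"
    show "x \<in> Q \<or> y \<in> Q"
    proof (rule ccontr)
      assume "\<not> ?thesis"
      then obtain q1 r1 q2 r2 where A: "q1 \<in> Q" "r1 \<in> R" "q1 + r1 * x \<in> M"
        and B: "q2 \<in> Q" "r2 \<in> R" "q2 + r2 * y \<in> M" using meet x y by meson
      have "(q1 + r1 * x) * (q2 + r2 * y) \<in> M" using A B Mm by blast
      moreover have e: "(q1 + r1 * x) * (q2 + r2 * y) = (q2 + r2 * y) * q1 + (r1 * x) * q2 + (r1 * r2) * (x * y)"
        by (simp add: algebra_simps)
      moreover have "q2 + r2 * y \<in> R" using QR B y Radd Rmul by blast
      then have "(q2 + r2 * y) * q1 \<in> Q" using Qmul A by blast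
      moreover have "(r1 * x) * q2 \<in> Q" using Qmul Rmul A B x by blast
      moreover have "(r1 * r2) * (x * y) \<in> Q" using Qmul Rmul A B xy by blast
      ultimately have "(q1 + r1 * x) * (q2 + r2 * y) \<in> Q" using Qadd by simp
      then show False using QM \<open>(q1 + r1 * x) * (q2 + r2 * y) \<in> M\<close> by blast
    qed
  qed
  then show ?thesis using IQ QM by blast
qed

lemma ideal_one_notin: "prime_ideal_of R P \<Longrightarrow> 1 \<notin> P"
proof
  assume P: "prime_ideal_of R P" and one: "1 \<in> P"
  have Pm: "\<forall>a\<in>R. \<forall>x\<in>P. a * x \<in> P" and PR: "P \<subseteq> R" and ne: "P \<noteq> R"
    using P unfolding prime_ideal_of_def ideal_of_def by auto
  have "R \<subseteq> P"
  proof
    fix a assume "a \<in> R"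
    then have "a * 1 \<in> P" using Pm one by blast
    then show "a \<in> P" by simp
  qed
  then show False using PR ne by blast
qed

lemma prime_pow: "prime_ideal_of R P \<Longrightarrow> subring R \<Longrightarrow> d \<in> R \<Longrightarrow> d ^ N \<in> P \<Longrightarrow> d \<in> P"
proof (induction N)
  case 0 then show ?case using ideal_one_notin by (metis power_0)
next
  case (Suc N)
  have dN: "d ^ N \<in> R" using subring_pow Suc.prems(2,3) by blast
  have pr: "\<forall>x\<in>R. \<forall>y\<in>R. x * y \<in> P \<longrightarrow> x \<in> P \<or> y \<in> P" using Suc.prems(1) unfolding prime_ideal_of_def by blast
  have "d * d ^ N \<in> P" using Suc.prems(4) by simp
  then have "d \<in> P \<or> d ^ N \<in> P" using pr dN Suc.prems(3) by blast
  then show ?case using Suc.IH Suc.prems by blast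
qed

lemma prime_prod: "finite F \<Longrightarrow> prime_ideal_of R P \<Longrightarrow> subring R \<Longrightarrow> (\<forall>x\<in>F. f x \<in> R \<and> f x \<notin> P)
   \<Longrightarrow> prod f F \<notin> P"
proof (induction F rule: finite_induct)
  case empty then show ?case using ideal_one_notin by (metis prod.empty)
next
  case (insert x F)
  have pF: "prod f F \<in> R" using subring_prod insert by blast
  have pr: "\<forall>x\<in>R. \<forall>y\<in>R. x * y \<in> P \<longrightarrow> x \<in> P \<or> y \<in> P" using insert.prems(1) unfolding prime_ideal_of_def by blast
  have "prod f (insert x F) = f x * prod f F" using insert.hyps by simp
  moreover have "prod f F \<notin> P" using insert by blast
  moreover have "f x \<in> R" "f x \<notin> P" using insert.prems by auto
  ultimately show ?case using pr pF by metis
qed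

definition extone :: "'k::field set \<Rightarrow> 'k set \<Rightarrow> bool" where
  "extone P B \<longleftrightarrow> (\<exists>(m::nat) c \<beta>. (\<forall>k<m. c k \<in> P \<and> \<beta> k \<in> B) \<and> (\<Sum>k<m. c k * \<beta> k) = 1)"

lemma extone_mono: "extone P B \<Longrightarrow> P \<subseteq> P' \<Longrightarrow> extone P' B"
  unfolding extone_def by blast

lemma sum_in_ideal: "ideal_of R Q \<Longrightarrow> (\<forall>k<(m::nat). c k \<in> Q \<and> \<beta> k \<in> R) \<Longrightarrow> (\<Sum>k<m. c k * \<beta> k) \<in> Q"
proof (induction m)
  case 0 then show ?case by (simp add: ideal_of_def)
next
  case (Suc m)
  have Qm: "\<forall>a\<in>R. \<forall>x\<in>Q. a * x \<in> Q" and Qa: "\<forall>x\<in>Q. \<forall>y\<in>Q. x + y \<in> Q"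
    using Suc.prems(1) unfolding ideal_of_def by auto
  have "\<beta> m \<in> R" "c m \<in> Q" using Suc.prems(2) by auto
  then have "\<beta> m * c m \<in> Q" using Qm by blast
  then have "c m * \<beta> m \<in> Q" by (simp add: mult.commute)
  moreover have "(\<Sum>k<m. c k * \<beta> k) \<in> Q" using Suc by auto
  ultimately show ?case using Qa by simp
qed

lemma subring_facts:
  assumes "subring R"
  shows "0 \<in> R" "1 \<in> R" "\<And>x y. x \<in> R \<Longrightarrow> y \<in> R \<Longrightarrow> x + y \<in> R"
    "\<And>x y. x \<in> R \<Longrightarrow> y \<in> R \<Longrightarrow> x * y \<in> R" "\<And>x. x \<in> R \<Longrightarrow> - x \<in> R"
  using assms unfolding subring_def by blast+

lemma ideal_facts:
  assumes "ideal_of R Q"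
  shows "Q \<subseteq> R" "0 \<in> Q" "\<And>x y. x \<in> Q \<Longrightarrow> y \<in> Q \<Longrightarrow> x + y \<in> Q"
    "\<And>a x. a \<in> R \<Longrightarrow> x \<in> Q \<Longrightarrow> a * x \<in> Q"
  using assms unfolding ideal_of_def by blast+

lemma F1:
  assumes A: "subring A" and ff: "is_fraction_field_of A" and fl: "flat_over A B"
    and AB: "A \<subseteq> B" and B: "subring B" and b: "b \<in> B"
  shows "extone {c \<in> A. c * b \<in> A} B"
proof -
  obtain p q where pq: "p \<in> A" "q \<in> A" "q \<noteq> 0" "b = p / q" using ff unfolding is_fraction_field_of_def by blast
  define a where "a = (\<lambda>i::nat. if i = 0 then p else - q)"
  define bb where "bb = (\<lambda>i::nat. if i = 0 then 1 else b)"
  have "-q \<in> A" "1 \<in> B" using pq subring_facts[OF A] subring_facts[OF B] by auto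
  then have "\<forall>i<2. a i \<in> A \<and> bb i \<in> B" using pq b unfolding a_def bb_def by auto
  moreover have "(\<Sum>i<2. a i * bb i) = 0" using pq by (simp add: a_def bb_def numeral_2_eq_2)
  ultimately have "(\<forall>i<2. a i \<in> A \<and> bb i \<in> B) \<and> (\<Sum>i<2. a i * bb i) = 0" by blast
  from fl[unfolded flat_over_def, rule_format, OF this]
  obtain m :: nat and c x where cx: "\<forall>j<m. c j \<in> B" "\<forall>i<2. \<forall>j<m. x i j \<in> A"
    "\<forall>i<2. bb i = (\<Sum>j<m. x i j * c j)" "\<forall>j<m. (\<Sum>i<2. a i * x i j) = 0"
    by blast
  have "\<forall>j<m. x 0 j \<in> {c \<in> A. c * b \<in> A} \<and> c j \<in> B"
  proof (intro allI impI)
    fix j assume j: "j < m"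
    have "(\<Sum>i<2. a i * x i j) = 0" using cx(4) j by blast
    then have "p * x 0 j - q * x 1 j = 0" by (simp add: a_def numeral_2_eq_2)
    then have e: "p * x 0 j = q * x 1 j" by simp
    have "x 0 j * b = (p * x 0 j) / q" using pq(4) by simp
    also have "\<dots> = x 1 j" using e pq(3) by simp
    finally have "x 0 j * b = x 1 j" .
    moreover have "x 0 j \<in> A" "x 1 j \<in> A" "c j \<in> B" using cx j by auto
    ultimately show "x 0 j \<in> {c \<in> A. c * b \<in> A} \<and> c j \<in> B" by auto
  qed
  moreover have "bb 0 = (\<Sum>j<m. x 0 j * c j)" using cx(3) by simp
  then have "(\<Sum>j<m. x 0 j * c j) = 1" by (simp add: bb_def)
  ultimately show ?thesis unfolding extone_def by blast
qed

lemma F2: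
  assumes A: "subring A" and BX: "B = \<Inter>{C. subring C \<and> A \<subseteq> C \<and> X \<subseteq> C}"
    and d: "d \<in> A" and dX: "\<forall>x\<in>X. d * x \<in> A" and b: "b \<in> B"
  shows "\<exists>N. d ^ N * b \<in> A"
proof -
  note Af = subring_facts[OF A]
  define D where "D = {y. \<exists>N. d ^ N * y \<in> A}"
  have "subring D" unfolding subring_def
  proof (intro conjI ballI)
    show "0 \<in> D" using Af unfolding D_def by auto
    have "d ^ 0 * 1 \<in> A" using Af by simp
    then show "1 \<in> D" unfolding D_def by blast
  next
    fix y z assume "y \<in> D" "z \<in> D"
    then obtain N1 N2 where N: "d ^ N1 * y \<in> A" "d ^ N2 * z \<in> A" unfolding D_def by blast
    have p1: "d ^ N1 \<in> A" "d ^ N2 \<in> A" using subring_pow A d by auto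
    have e1: "d ^ (N1 + N2) * (y + z) = d ^ N2 * (d ^ N1 * y) + d ^ N1 * (d ^ N2 * z)"
      by (simp add: power_add algebra_simps)
    have "d ^ N2 * (d ^ N1 * y) + d ^ N1 * (d ^ N2 * z) \<in> A"
      using Af(3)[OF Af(4)[OF p1(2) N(1)] Af(4)[OF p1(1) N(2)]] .
    then have "d ^ (N1 + N2) * (y + z) \<in> A" unfolding e1 .
    then show "y + z \<in> D" unfolding D_def by blast
    have e2: "d ^ (N1 + N2) * (y * z) = (d ^ N1 * y) * (d ^ N2 * z)"
      by (simp add: power_add algebra_simps)
    have "(d ^ N1 * y) * (d ^ N2 * z) \<in> A" using Af(4)[OF N(1) N(2)] .
    then have "d ^ (N1 + N2) * (y * z) \<in> A" unfolding e2 .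
    then show "y * z \<in> D" unfolding D_def by blast
    have e3: "d ^ N1 * (- y) = - (d ^ N1 * y)" by simp
    have "- (d ^ N1 * y) \<in> A" using Af(5)[OF N(1)] .
    then have "d ^ N1 * (- y) \<in> A" unfolding e3 .
    then show "- y \<in> D" unfolding D_def by blast
  qed
  moreover have "A \<subseteq> D"
  proof
    fix y assume "y \<in> A" then have "d ^ 0 * y \<in> A" by simp
    then show "y \<in> D" unfolding D_def by blast
  qed
  moreover have "X \<subseteq> D"
  proof
    fix y assume "y \<in> X" then have "d ^ 1 * y \<in> A" using dX by simp
    then show "y \<in> D" unfolding D_def by blast
  qed
  ultimately have "B \<subseteq> D" using BX by blast
  then show ?thesis using b unfolding D_def by blast
qed

lemma G:
  assumes A: "subring A" and d: "d \<in> A" and dB: "\<forall>b\<in>B. \<exists>N. d ^ N * b \<in> A"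
    and P: "prime_ideal_of A P" and g: "extone P B"
  shows "d \<in> P"
proof -
  note Af = subring_facts[OF A]
  have Pi: "ideal_of A P" using P unfolding prime_ideal_of_def by blast
  note Pf = ideal_facts[OF Pi]
  have claim: "\<forall>k<(m::nat). c k \<in> P \<and> \<beta> k \<in> B \<Longrightarrow> \<exists>N. d ^ N * (\<Sum>k<m. c k * \<beta> k) \<in> P" for m c \<beta>
  proof (induction m)
    case 0 have "d ^ 0 * (\<Sum>k<0. c k * \<beta> k) \<in> P" using Pf(2) by simp
    then show ?case by blast
  next
    case (Suc m)
    have h: "\<forall>k<m. c k \<in> P \<and> \<beta> k \<in> B" "c m \<in> P" "\<beta> m \<in> B" using Suc.prems by auto
    obtain N1 where N1: "d ^ N1 * (\<Sum>k<m. c k * \<beta> k) \<in> P" using Suc.IH[OF h(1)] by blast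
    obtain N2 where N2: "d ^ N2 * \<beta> m \<in> A" using dB h(3) by blast
    have p1: "d ^ N1 \<in> A" "d ^ N2 \<in> A" using subring_pow A d by auto
    have e: "d ^ (N1 + N2) * (\<Sum>k<Suc m. c k * \<beta> k) = d ^ N2 * (d ^ N1 * (\<Sum>k<m. c k * \<beta> k)) + (d ^ N1 * (d ^ N2 * \<beta> m)) * c m"
      by (simp add: power_add algebra_simps)
    have m1: "(d ^ N1 * (d ^ N2 * \<beta> m)) * c m \<in> P" using Pf(4)[OF Af(4)[OF p1(1) N2] h(2)] .
    have m2: "d ^ N2 * (d ^ N1 * (\<Sum>k<m. c k * \<beta> k)) \<in> P" using Pf(4)[OF p1(2) N1] .
    have "d ^ (N1 + N2) * (\<Sum>k<Suc m. c k * \<beta> k) \<in> P" unfolding e using Pf(3)[OF m2 m1] .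
    then show ?case by blast
  qed
  obtain m :: nat and c \<beta> where cb: "\<forall>k<m. c k \<in> P \<and> \<beta> k \<in> B" "(\<Sum>k<m. c k * \<beta> k) = 1"
    using g unfolding extone_def by blast
  obtain N where "d ^ N * (\<Sum>k<m. c k * \<beta> k) \<in> P" using claim[OF cb(1)] by blast
  then have "d ^ N \<in> P" using cb(2) by simp
  then show ?thesis using prime_pow P A d by blast
qed


lemma H:
  assumes A: "subring A" and P: "prime_ideal_of A P" and fin: "finite X"
    and IXP: "{c \<in> A. \<forall>x\<in>X. c * x \<in> A} \<subseteq> P"
    and ext: "\<forall>x\<in>X. extone {c \<in> A. c * x \<in> A} B"
  shows "extone P B"
proof (rule ccontr)
  assume ne: "\<not> extone P B"
  note Af = subring_facts[OF A]
  have "\<forall>x\<in>X. \<exists>c. c \<in> A \<and> c * x \<in> A \<and> c \<notin> P"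
  proof
    fix x assume x: "x \<in> X"
    show "\<exists>c. c \<in> A \<and> c * x \<in> A \<and> c \<notin> P"
    proof (rule ccontr)
      assume "\<not> ?thesis"
      then have "{c \<in> A. c * x \<in> A} \<subseteq> P" by blast
      then have "extone P B" using extone_mono ext x by blast
      then show False using ne by blast
    qed
  qed
  then obtain f where f: "\<forall>x\<in>X. f x \<in> A \<and> f x * x \<in> A \<and> f x \<notin> P" by metis
  have cA: "prod f X \<in> A" using subring_prod[OF fin A] f by blast
  have cP: "prod f X \<notin> P" using prime_prod[OF fin P A] f by blast
  have "\<forall>x\<in>X. prod f X * x \<in> A"
  proof
    fix x assume x: "x \<in> X"
    have "prod f X = f x * prod f (X - {x})" using prod.remove[OF fin x] .
    then have e: "prod f X * x = (f x * x) * prod f (X - {x})" by (simp add: algebra_simps)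
    have "prod f (X - {x}) \<in> A" using subring_prod[OF _ A] fin f by blast
    then show "prod f X * x \<in> A" unfolding e using Af(4) f x by blast
  qed
  then have "prod f X \<in> P" using IXP cA by blast
  then show False using cP by blast
qed

lemma prime_zero:
  assumes A: "subring A"
  shows "prime_ideal_of A {0}"
  using subring_facts[OF A] unfolding prime_ideal_of_def ideal_of_def by auto

lemma dim_one:
  assumes K: "krull_dim_eq A 1" and A: "subring A" and P: "prime_ideal_of A P"
    and Q: "prime_ideal_of A Q" and QP: "Q \<subseteq> P" and t: "t \<in> Q" "t \<noteq> 0"
  shows "Q = P"
proof (rule ccontr)
  assume ne: "Q \<noteq> P"
  define C where "C = (\<lambda>i::nat. if i = 0 then {0} else if i = 1 then Q else P)"
  have "\<forall>i\<le>2. prime_ideal_of A (C i)"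
  proof (intro allI impI)
    fix i :: nat assume "i \<le> 2"
    then have "i = 0 \<or> i = 1 \<or> i = 2" by auto
    then show "prime_ideal_of A (C i)" using prime_zero[OF A] P Q unfolding C_def by auto
  qed
  moreover have "\<forall>i<2. C i \<subset> C (Suc i)"
  proof (intro allI impI)
    fix i :: nat assume "i < 2"
    then have "i = 0 \<or> i = 1" by auto
    moreover have "{0} \<subset> Q" using t Q unfolding prime_ideal_of_def ideal_of_def by auto
    moreover have "Q \<subset> P" using QP ne by blast
    ultimately show "C i \<subset> C (Suc i)" unfolding C_def by auto
  qed
  ultimately have "prime_chain_of_length A 2" unfolding prime_chain_of_length_def by blast
  then show False using K unfolding krull_dim_eq_def by auto
qed

theorem theorem4p22:
  fixes A B :: "'k::field set"
  assumes "subring A"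
    and "is_fraction_field_of A"
    and "krull_dim_eq A 1"
    and "overring A B"
    and "fin_gen_algebra A B"
    and "flat_over A B"
    and "well_centered A B"
  shows "is_localization A B"
proof -
  have A: "subring A" and ff: "is_fraction_field_of A" and K: "krull_dim_eq A 1"
    and fl: "flat_over A B" and wc: "well_centered A B" using assms by blast+
  note Af = subring_facts[OF A]
  have Bs: "subring B" and AB: "A \<subseteq> B" using assms(4) unfolding overring_def by blast+
  note Bf = subring_facts[OF Bs]
  obtain X where X: "finite X" "X \<subseteq> B" and BX: "B = \<Inter>{C. subring C \<and> A \<subseteq> C \<and> X \<subseteq> C}"
    using assms(5) unfolding fin_gen_algebra_def by blast
  define IX where "IX = {c \<in> A. \<forall>x\<in>X. c * x \<in> A}"
  have F1': "extone {c \<in> A. c * b \<in> A} B" if "b \<in> B" for b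
    using F1[OF A ff fl AB Bs that] .
  have Gp: "IX \<subseteq> P" if P: "prime_ideal_of A P" and g: "extone P B" for P
  proof
    fix d assume d: "d \<in> IX"
    have "\<forall>b\<in>B. \<exists>N. d ^ N * b \<in> A" using F2[OF A BX] d unfolding IX_def by blast
    then show "d \<in> P" using G[OF A _ _ P g] d unfolding IX_def by blast
  qed
  have Hp: "extone P B" if P: "prime_ideal_of A P" and IXP: "IX \<subseteq> P" for P
    using H[OF A P X(1)] IXP F1' X(2) unfolding IX_def by blast
  have IXi: "ideal_of A IX" unfolding ideal_of_def
  proof (intro conjI ballI)
    show "IX \<subseteq> A" unfolding IX_def by blast
    show "0 \<in> IX" unfolding IX_def using Af by simp
  next
    fix x y assume "x \<in> IX" "y \<in> IX"
    then show "x + y \<in> IX" unfolding IX_def using Af(3) by (simp add: distrib_right)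
  next
    fix a x assume "a \<in> A" "x \<in> IX"
    then show "a * x \<in> IX" unfolding IX_def using Af(4) by (simp add: mult.assoc)
  qed
  note IXf = ideal_facts[OF IXi]
  have "\<forall>x\<in>X. \<exists>q. q \<in> A \<and> q \<noteq> 0 \<and> q * x \<in> A"
  proof
    fix x assume "x \<in> X"
    obtain a b where ab: "a \<in> A" "b \<in> A" "b \<noteq> 0" "x = a / b" using ff unfolding is_fraction_field_of_def by blast
    then have "b * x = a" by simp
    then show "\<exists>q. q \<in> A \<and> q \<noteq> 0 \<and> q * x \<in> A" using ab by metis
  qed
  then obtain g where g: "\<forall>x\<in>X. g x \<in> A \<and> g x \<noteq> 0 \<and> g x * x \<in> A" by metis
  define t where "t = prod g X"
  have tA: "t \<in> A" unfolding t_def using subring_prod[OF X(1) A] g by blast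
  have t0: "t \<noteq> 0" unfolding t_def using X(1) g by simp
  have tIX: "t \<in> IX"
  proof -
    have "\<forall>x\<in>X. t * x \<in> A"
    proof
      fix x assume x: "x \<in> X"
      have "t = g x * prod g (X - {x})" unfolding t_def using prod.remove[OF X(1) x] .
      then have e: "t * x = (g x * x) * prod g (X - {x})" by (simp add: algebra_simps)
      have "prod g (X - {x}) \<in> A" using subring_prod[OF _ A] X(1) g by blast
      then show "t * x \<in> A" unfolding e using Af(4) g x by blast
    qed
    then show ?thesis using tA unfolding IX_def by blast
  qed
  have "\<exists>l j. l \<in> A \<and> l / t \<in> B \<and> j \<in> IX \<and> l + j = 1"
  proof (rule ccontr)
    assume no: "\<not> ?thesis"
    define L where "L = {l \<in> A. l / t \<in> B}"
    define J where "J = {l + j | l j. l \<in> L \<and> j \<in> IX}"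
    have Li: "ideal_of A L" unfolding ideal_of_def
    proof (intro conjI ballI)
      show "L \<subseteq> A" unfolding L_def by blast
      have "(0::'k) / t = 0" by simp
      then show "0 \<in> L" unfolding L_def using Af(1) Bf(1) by simp
    next
      fix x y assume "x \<in> L" "y \<in> L"
      then have H: "x \<in> A" "y \<in> A" "x / t \<in> B" "y / t \<in> B" unfolding L_def by blast+
      have e: "(x + y) / t = x / t + y / t" by (simp add: add_divide_distrib)
      have "x + y \<in> A" using Af(3)[OF H(1,2)] .
      moreover have "(x + y) / t \<in> B" unfolding e using Bf(3)[OF H(3,4)] .
      ultimately show "x + y \<in> L" unfolding L_def by blast
    next
      fix a x assume a: "a \<in> A" and x: "x \<in> L"
      have e: "a * x / t = a * (x / t)" by simp
      have "x \<in> A" "x / t \<in> B" using x unfolding L_def by blast+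
      moreover have "a \<in> B" using a AB by blast
      ultimately have "a * x \<in> A" "a * (x / t) \<in> B" using Af(4)[OF a] Bf(4) by blast+
      moreover have "a * x / t \<in> B" unfolding e by fact
      ultimately show "a * x \<in> L" unfolding L_def by blast
    qed
    note Lf = ideal_facts[OF Li]
    have Ji: "ideal_of A J" unfolding ideal_of_def
    proof (intro conjI ballI)
      show "J \<subseteq> A" unfolding J_def using Lf(1) IXf(1) Af(3) by blast
      have "(0::'k) = 0 + 0" by simp
      then show "0 \<in> J" unfolding J_def using Lf(2) IXf(2) by blast
    next
      fix x y assume "x \<in> J" "y \<in> J"
      then obtain l1 j1 l2 j2 where H: "x = l1 + j1" "y = l2 + j2" "l1 \<in> L" "l2 \<in> L" "j1 \<in> IX" "j2 \<in> IX"
        unfolding J_def by blast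
      have "x + y = (l1 + l2) + (j1 + j2)" using H by (simp add: algebra_simps)
      moreover have "l1 + l2 \<in> L" "j1 + j2 \<in> IX" using H Lf(3) IXf(3) by blast+
      ultimately show "x + y \<in> J" unfolding J_def by blast
    next
      fix a x assume a: "a \<in> A" and "x \<in> J"
      then obtain l1 j1 where H: "x = l1 + j1" "l1 \<in> L" "j1 \<in> IX" unfolding J_def by blast
      have "a * x = a * l1 + a * j1" using H by (simp add: algebra_simps)
      moreover have "a * l1 \<in> L" "a * j1 \<in> IX" using H a Lf(4) IXf(4) by blast+
      ultimately show "a * x \<in> J" unfolding J_def by blast
    qed
    have "J \<inter> {1} = {}" using no unfolding J_def L_def by blast
    moreover have "{1} \<subseteq> A" "(1::'k) \<in> {1}" "\<forall>x\<in>{1::'k}. \<forall>y\<in>{1}. x * y \<in> {1}" using Af(2) by auto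
    ultimately obtain P where P: "prime_ideal_of A P" "J \<subseteq> P" "P \<inter> {1} = {}"
      using prime_exists[OF A Ji, of "{1}"] by blast
    have Pi: "ideal_of A P" using P unfolding prime_ideal_of_def by blast
    note Pf = ideal_facts[OF Pi]
    have IXP: "IX \<subseteq> P"
    proof
      fix j assume "j \<in> IX"
      moreover have "j = 0 + j" by simp
      ultimately have "j \<in> J" unfolding J_def using Lf(2) by blast
      then show "j \<in> P" using P by blast
    qed
    have LP: "L \<subseteq> P"
    proof
      fix l assume "l \<in> L"
      moreover have "l = l + 0" by simp
      ultimately have "l \<in> J" unfolding J_def using IXf(2) by blast
      then show "l \<in> P" using P by blast
    qed
    have extP: "extone P B" using Hp[OF P(1) IXP] .
    define T where "T = {t * \<beta> | \<beta>. \<beta> \<in> B}"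
    have Ti: "ideal_of B T" unfolding ideal_of_def
    proof (intro conjI ballI)
      show "T \<subseteq> B" unfolding T_def using Bf(4) tA AB by blast
      have "(0::'k) = t * 0" by simp
      then show "0 \<in> T" unfolding T_def using Bf(1) by blast
    next
      fix x y assume "x \<in> T" "y \<in> T"
      then obtain b1 b2 where H: "x = t * b1" "y = t * b2" "b1 \<in> B" "b2 \<in> B" unfolding T_def by blast
      have "x + y = t * (b1 + b2)" using H by (simp add: algebra_simps)
      then show "x + y \<in> T" unfolding T_def using H Bf(3) by blast
    next
      fix a x assume a: "a \<in> B" and "x \<in> T"
      then obtain b1 where H: "x = t * b1" "b1 \<in> B" unfolding T_def by blast
      have "a * x = t * (a * b1)" using H by (simp add: algebra_simps)
      then show "a * x \<in> T" unfolding T_def using H a Bf(4) by blast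
    qed
    have Mm: "\<forall>x\<in>A - P. \<forall>y\<in>A - P. x * y \<in> A - P"
    proof (intro ballI)
      fix x y assume x: "x \<in> A - P" and y: "y \<in> A - P"
      have pr: "\<forall>x\<in>A. \<forall>y\<in>A. x * y \<in> P \<longrightarrow> x \<in> P \<or> y \<in> P" using P(1) unfolding prime_ideal_of_def by blast
      have "x * y \<in> A" using Af(4) x y by blast
      moreover have "x * y \<notin> P" using pr x y by blast
      ultimately show "x * y \<in> A - P" by blast
    qed
    have TM: "T \<inter> (A - P) = {}"
    proof (rule ccontr)
      assume "T \<inter> (A - P) \<noteq> {}"
      then obtain \<beta> where b: "\<beta> \<in> B" "t * \<beta> \<in> A" "t * \<beta> \<notin> P" unfolding T_def by blast
      have "t * \<beta> / t = \<beta>" using t0 by simp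
      then have "t * \<beta> \<in> L" unfolding L_def using b by simp
      then show False using LP b by blast
    qed
    have one: "1 \<in> A - P" using Af(2) P(3) by blast
    obtain Q where Q: "prime_ideal_of B Q" "T \<subseteq> Q" "Q \<inter> (A - P) = {}"
      using prime_exists[OF Bs Ti _ one Mm TM] AB by blast
    have Qi: "ideal_of B Q" using Q unfolding prime_ideal_of_def by blast
    note Qf = ideal_facts[OF Qi]
    have Q1: "1 \<notin> Q" using Q one by blast
    have Q'prime: "prime_ideal_of A (Q \<inter> A)" unfolding prime_ideal_of_def ideal_of_def
    proof (intro conjI ballI impI)
      show "Q \<inter> A \<subseteq> A" by blast
      show "0 \<in> Q \<inter> A" using Qf(2) Af(1) by blast
      show "Q \<inter> A \<noteq> A" using Q1 Af(2) by blast
    next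
      fix x y assume "x \<in> Q \<inter> A" "y \<in> Q \<inter> A"
      then show "x + y \<in> Q \<inter> A" using Qf(3) Af(3) by blast
    next
      fix a x assume "a \<in> A" "x \<in> Q \<inter> A"
      then show "a * x \<in> Q \<inter> A" using Qf(4) Af(4) AB by blast
    next
      fix x y assume "x \<in> A" "y \<in> A" "x * y \<in> Q \<inter> A"
      then show "x \<in> Q \<inter> A \<or> y \<in> Q \<inter> A" using Q(1) AB unfolding prime_ideal_of_def by blast
    qed
    have Q'P: "Q \<inter> A \<subseteq> P" using Q(3) by blast
    have "t = t * 1" by simp
    then have "t \<in> T" unfolding T_def using Bf(2) by blast
    then have tQ': "t \<in> Q \<inter> A" using Q(2) tA by blast
    have "Q \<inter> A = P" using dim_one[OF K A P(1) Q'prime Q'P tQ' t0] .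
    then have PQ: "P \<subseteq> Q" by blast
    obtain m :: nat and c \<beta> where cb: "\<forall>k<m. c k \<in> P \<and> \<beta> k \<in> B" "(\<Sum>k<m. c k * \<beta> k) = 1"
      using extP unfolding extone_def by blast
    have "\<forall>k<m. c k \<in> Q \<and> \<beta> k \<in> B" using cb(1) PQ by blast
    then have "(\<Sum>k<m. c k * \<beta> k) \<in> Q" using sum_in_ideal[OF Qi] by blast
    then show False using cb(2) Q1 by simp
  qed
  then obtain l j where lj: "l \<in> A" "l / t \<in> B" "j \<in> IX" "l + j = 1" by blast
  obtain u where u: "unit_of B u" "u * (l / t) \<in> A" using wc lj(2) unfolding well_centered_def by blast
  obtain v where v: "v \<in> B" "u * v = 1" using u(1) unfolding unit_of_def by blast
  have uB: "u \<in> B" using u(1) unfolding unit_of_def by blast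
  have u0: "u \<noteq> 0" using v by auto
  define a where "a = u * (l / t)"
  have aA: "a \<in> A" using u(2) unfolding a_def .
  have lu: "l * u = a * t" unfolding a_def using t0 by simp
  have noP: "False" if P: "prime_ideal_of A P" and ext: "extone P B" and lP: "l \<in> P" for P
  proof -
    have "IX \<subseteq> P" using Gp[OF P ext] .
    then have "j \<in> P" using lj(3) by blast
    have Pi: "ideal_of A P" using P unfolding prime_ideal_of_def by blast
    have "l + j \<in> P" using ideal_facts(3)[OF Pi lP \<open>j \<in> P\<close>] .
    then show False using lj(4) ideal_one_notin[OF P] by simp
  qed
  have uA: "u \<in> A"
  proof (rule ccontr)
    assume nu: "u \<notin> A"
    define Iu where "Iu = {c \<in> A. c * u \<in> A}"
    have Iui: "ideal_of A Iu" unfolding ideal_of_def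
    proof (intro conjI ballI)
      show "Iu \<subseteq> A" unfolding Iu_def by blast
      show "0 \<in> Iu" unfolding Iu_def using Af by simp
    next
      fix x y assume "x \<in> Iu" "y \<in> Iu"
      then show "x + y \<in> Iu" unfolding Iu_def using Af(3) by (simp add: distrib_right)
    next
      fix c x assume "c \<in> A" "x \<in> Iu"
      then show "c * x \<in> Iu" unfolding Iu_def using Af(4) by (simp add: mult.assoc)
    qed
    have "Iu \<inter> {1} = {}" using nu unfolding Iu_def by auto
    moreover have "{1} \<subseteq> A" "(1::'k) \<in> {1}" "\<forall>x\<in>{1::'k}. \<forall>y\<in>{1}. x * y \<in> {1}" using Af(2) by auto
    ultimately obtain P where P: "prime_ideal_of A P" "Iu \<subseteq> P"
      using prime_exists[OF A Iui, of "{1}"] by blast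
    have "extone P B" using extone_mono[OF F1'[OF uB]] P(2) unfolding Iu_def by blast
    moreover have "l \<in> Iu" unfolding Iu_def using lj(1) lu aA tA Af(4) by simp
    ultimately show False using noP[OF P(1)] P(2) by blast
  qed
  have den: "\<exists>N. u ^ N * b \<in> A" if b: "b \<in> B" for b
  proof (rule ccontr)
    assume nb: "\<not> ?thesis"
    define Ib where "Ib = {c \<in> A. c * b \<in> A}"
    have Ibi: "ideal_of A Ib" unfolding ideal_of_def
    proof (intro conjI ballI)
      show "Ib \<subseteq> A" unfolding Ib_def by blast
      show "0 \<in> Ib" unfolding Ib_def using Af by simp
    next
      fix x y assume "x \<in> Ib" "y \<in> Ib"
      then show "x + y \<in> Ib" unfolding Ib_def using Af(3) by (simp add: distrib_right)
    next
      fix c x assume "c \<in> A" "x \<in> Ib"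
      then show "c * x \<in> Ib" unfolding Ib_def using Af(4) by (simp add: mult.assoc)
    qed
    define M where "M = range (\<lambda>N::nat. u ^ N)"
    have MA: "M \<subseteq> A" unfolding M_def using subring_pow[OF A uA] by blast
    have M1: "1 \<in> M" unfolding M_def by (metis power_0 rangeI)
    have Mm: "\<forall>x\<in>M. \<forall>y\<in>M. x * y \<in> M" unfolding M_def by (auto simp: power_add[symmetric])
    have IbM: "Ib \<inter> M = {}" using nb unfolding Ib_def M_def by blast
    obtain P where P: "prime_ideal_of A P" "Ib \<subseteq> P" "P \<inter> M = {}"
      using prime_exists[OF A Ibi MA M1 Mm IbM] by blast
    have Pi: "ideal_of A P" using P unfolding prime_ideal_of_def by blast
    have ext: "extone P B" using extone_mono[OF F1'[OF b]] P(2) unfolding Ib_def by blast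
    have "IX \<subseteq> P" using Gp[OF P(1) ext] .
    then have tP: "t \<in> P" using tIX by blast
    have lnP: "l \<notin> P" using noP[OF P(1) ext] by blast
    have "a * t \<in> P" using ideal_facts(4)[OF Pi aA tP] .
    then have "u * l \<in> P" using lu by (simp add: mult.commute)
    then have "u \<in> P \<or> l \<in> P" using P(1) uA lj(1) unfolding prime_ideal_of_def by blast
    moreover have "u \<in> M" unfolding M_def by (metis power_one_right rangeI)
    ultimately show False using lnP P(3) by blast
  qed
  show ?thesis unfolding is_localization_def
  proof (intro exI conjI)
    show "range (\<lambda>N::nat. u ^ N) \<subseteq> A - {0}" using subring_pow[OF A uA] u0 by auto
    show "1 \<in> range (\<lambda>N::nat. u ^ N)" by (metis power_0 rangeI)
    show "\<forall>s\<in>range (\<lambda>N::nat. u ^ N). \<forall>t\<in>range (\<lambda>N::nat. u ^ N). s * t \<in> range (\<lambda>N::nat. u ^ N)"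
      by (auto simp: power_add[symmetric])
    show "B = {a / s |a s. a \<in> A \<and> s \<in> range (\<lambda>N::nat. u ^ N)}"
    proof
      show "B \<subseteq> {a / s |a s. a \<in> A \<and> s \<in> range (\<lambda>N::nat. u ^ N)}"
      proof
        fix b assume b: "b \<in> B"
        obtain N where N: "u ^ N * b \<in> A" using den[OF b] by blast
        have "b = (u ^ N * b) / u ^ N" using u0 by simp
        then show "b \<in> {a / s |a s. a \<in> A \<and> s \<in> range (\<lambda>N::nat. u ^ N)}" using N by blast
      qed
    next
      show "{a / s |a s. a \<in> A \<and> s \<in> range (\<lambda>N::nat. u ^ N)} \<subseteq> B"
      proof
        fix y assume "y \<in> {a / s |a s. a \<in> A \<and> s \<in> range (\<lambda>N::nat. u ^ N)}"
        then obtain c N where y: "y = c / u ^ N" "c \<in> A" by blast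
        have "v = 1 / u" using v(2) u0 by (simp add: field_simps)
        then have "y = c * v ^ N" using y(1) by (simp add: power_one_over)
        moreover have "v ^ N \<in> B" using subring_pow[OF Bs v(1)] .
        ultimately show "y \<in> B" using Bf(4) AB y(2) by blast
      qed
    qed
  qed
qed

end
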